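(* Let $N$ be a positive even integer, $M_t$ a positive integer, and $\theta\in\mathbb R$. Let $\hat{\mathbf G}_t\in\mathbb C^{N\times M_t}$ be a random matrix with i.i.d. circularly symmetric complex Gaussian entries of zero mean and unit variance, and let $\gamma_2^\star=\max_{\mathbf\Phi}\|\hat{\mathbf G}_t^T\mathbf\Phi^T\mathbf a(\theta)\|^2$, the maximum over all $\mathbf\Phi=\mathrm{diag}(e^{j\phi_1},\dots,e^{j\phi_N})$ with $\phi_n\in\mathbb R$. Then $\frac{\pi N(N-1)}{4}+M_tN\le\mathbb E[\gamma_2^\star]\le M_tN^2.$
   Context: $j=\sqrt{-1}$. Fix $\hat d>0$, $\lambda>0$; $\mathbf a(\theta)\in\mathbb C^N$ is the steering vector with $n$-th entry $e^{j\pi(2n-N-1)\hat d\sin\theta/\lambda}$, $n=1,\dots,N$. *)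

theory Defs
  imports "HOL-Probability.Probability"
begin

definition steering :: "real \<Rightarrow> real \<Rightarrow> nat \<Rightarrow> real \<Rightarrow> nat \<Rightarrow> complex" where
  "steering dhat lam N \<theta> n =
     cis (pi * (2 * real n - real N - 1) * dhat * sin \<theta> / lam)"

definition std_cgauss_density :: "complex \<Rightarrow> real" where
  "std_cgauss_density z = exp (- (cmod z)\<^sup>2) / pi"

text \<open>||G^T Phi^T a(theta)||^2 for Phi = diag(e^{j phi_1},...,e^{j phi_N});
  G is N x M_t with entries G n k, n = 1..N, k = 1..M_t.\<close>
definition beam_gain :: "(nat \<Rightarrow> nat \<Rightarrow> complex) \<Rightarrow> real \<Rightarrow> real \<Rightarrow> nat \<Rightarrow> nat \<Rightarrow> real
    \<Rightarrow> (nat \<Rightarrow> real) \<Rightarrow> real" where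
  "beam_gain G dhat lam N Mt \<theta> \<phi> =
     (\<Sum>k=1..Mt. (cmod (\<Sum>n=1..N. G n k * cis (\<phi> n) * steering dhat lam N \<theta> n))\<^sup>2)"

definition gamma2_star :: "(nat \<Rightarrow> nat \<Rightarrow> complex) \<Rightarrow> real \<Rightarrow> real \<Rightarrow> nat \<Rightarrow> nat \<Rightarrow> real \<Rightarrow> real" where
  "gamma2_star G dhat lam N Mt \<theta> = (SUP \<phi>. beam_gain G dhat lam N Mt \<theta> \<phi>)"

end

theory Submission
  imports Defs
begin


lemma exp_neg_sq_lim: "((\<lambda>r::real. exp (- r\<^sup>2)) \<longlongrightarrow> 0) at_top"
    by (intro filterlim_compose[OF exp_at_bot] filterlim_compose[OF filterlim_uminus_at_bot_at_top]
                   filterlim_pow_at_top filterlim_ident) auto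

lemma exp_tail_lim: "((\<lambda>r::real. (r\<^sup>2 + c) * exp (- r\<^sup>2)) \<longlongrightarrow> 0) at_top"
proof -
  have a: "((\<lambda>r::real. (r\<^sup>2) ^ 1 / exp (r\<^sup>2)) \<longlongrightarrow> 0) at_top"
    by (intro filterlim_compose[OF tendsto_power_div_exp_0] filterlim_pow_at_top filterlim_ident) auto
  have b: "((\<lambda>r::real. exp (- r\<^sup>2)) \<longlongrightarrow> 0) at_top"
    by (intro filterlim_compose[OF exp_at_bot] filterlim_compose[OF filterlim_uminus_at_bot_at_top]
                   filterlim_pow_at_top filterlim_ident) auto
  have "((\<lambda>r::real. (r\<^sup>2) ^ 1 / exp (r\<^sup>2) + c * exp (- r\<^sup>2)) \<longlongrightarrow> 0 + c * 0) at_top"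
    by (intro tendsto_intros a b)
  then show ?thesis by (simp add: exp_minus field_simps)
qed

lemma exp_integral_atLeast:
  "(\<integral>\<^sup>+r. ennreal (2 * r * exp (- r\<^sup>2)) * indicator {a..} r \<partial>lborel) = ennreal (exp (- a\<^sup>2))"
  if "a \<ge> 0" for a :: real
proof -
  have "(\<integral>\<^sup>+r. ennreal (2 * r * exp (- r\<^sup>2)) * indicator {a..} r \<partial>lborel) = 0 - (- exp (- a\<^sup>2))"
  proof (rule nn_integral_FTC_atLeast)
    show "((\<lambda>r::real. - exp (- r\<^sup>2)) \<longlongrightarrow> 0) at_top"
      using tendsto_minus[OF exp_neg_sq_lim] by simp
  qed (use that in \<open>auto intro!: derivative_eq_intros\<close>)
  then show ?thesis by simp
qed

lemma ball_annulus:
  assumes "0 \<le> t"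
  shows "emeasure lborel {z::complex. t \<le> cmod z \<and> cmod z \<le> r} = ennreal (if t \<le> r then pi * (r\<^sup>2 - t\<^sup>2) else 0)"
proof (cases "t \<le> r")
  case True
  have eq: "{z::complex. t \<le> cmod z \<and> cmod z \<le> r} = cball 0 r - ball 0 t"
    by (auto simp: dist_norm)
  have "emeasure lborel (cball (0::complex) r - ball 0 t) = emeasure lborel (cball (0::complex) r) - emeasure lborel (ball (0::complex) t)"
    using True assms by (intro emeasure_Diff) (auto simp: emeasure_ball)
  also have "\<dots> = ennreal (pi * r\<^sup>2) - ennreal (pi * t\<^sup>2)"
    using True assms by (simp add: emeasure_ball emeasure_cball unit_ball_vol_2)
  also have "\<dots> = ennreal (pi * (r\<^sup>2 - t\<^sup>2))"
    using True assms by (subst ennreal_minus) (auto simp: algebra_simps intro!: power_mono)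
  finally show ?thesis using True eq by simp
next
  case False
  then have "{z::complex. t \<le> cmod z \<and> cmod z \<le> r} = {}" by auto
  then show ?thesis using False by (simp del: Collect_empty_eq)
qed

lemma tail:
  assumes t: "0 \<le> t"
  shows "(\<integral>\<^sup>+z. ennreal (exp (- (cmod z)\<^sup>2)) * indicator {z::complex. t \<le> cmod z} z \<partial>lborel) = ennreal (pi * exp (- t\<^sup>2))"
proof -
  have PS: "pair_sigma_finite (lborel :: complex measure) (lborel :: real measure)"
    by (intro pair_sigma_finite.intro) (simp_all add: sigma_finite_lborel)
  define F where "F = (\<lambda>p::complex \<times> real. ennreal (2 * snd p * exp (- (snd p)\<^sup>2)) *
      indicator {p. t \<le> cmod (fst p) \<and> cmod (fst p) \<le> snd p} p)"
  have Fm: "F \<in> borel_measurable (lborel \<Otimes>\<^sub>M lborel)"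
    unfolding F_def by measurable
  have "(\<integral>\<^sup>+z. ennreal (exp (- (cmod z)\<^sup>2)) * indicator {z::complex. t \<le> cmod z} z \<partial>lborel)
      = (\<integral>\<^sup>+z. (\<integral>\<^sup>+r. F (z, r) \<partial>lborel) \<partial>lborel)"
  proof (intro nn_integral_cong)
    fix z :: complex
    have "(\<integral>\<^sup>+r. F (z, r) \<partial>lborel) = (\<integral>\<^sup>+r. ennreal (2 * r * exp (- r\<^sup>2)) * indicator {cmod z..} r * indicator {z::complex. t \<le> cmod z} z \<partial>lborel)"
      by (intro nn_integral_cong) (auto simp: F_def split: split_indicator)
    also have "\<dots> = (\<integral>\<^sup>+r. ennreal (2 * r * exp (- r\<^sup>2)) * indicator {cmod z..} r \<partial>lborel) * indicator {z::complex. t \<le> cmod z} z"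
      by (rule nn_integral_multc) measurable
    also have "\<dots> = ennreal (exp (- (cmod z)\<^sup>2)) * indicator {z::complex. t \<le> cmod z} z"
      by (subst exp_integral_atLeast) auto
    finally show "ennreal (exp (- (cmod z)\<^sup>2)) * indicator {z::complex. t \<le> cmod z} z = (\<integral>\<^sup>+r. F (z, r) \<partial>lborel)" ..
  qed
  also have "\<dots> = (\<integral>\<^sup>+r. (\<integral>\<^sup>+z. F (z, r) \<partial>lborel) \<partial>lborel)"
    by (rule pair_sigma_finite.Fubini[OF PS Fm, symmetric])
  also have "\<dots> = (\<integral>\<^sup>+r. ennreal (2 * r * exp (- r\<^sup>2) * (pi * (r\<^sup>2 - t\<^sup>2))) * indicator {t..} r \<partial>lborel)"
  proof (intro nn_integral_cong)
    fix r :: real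
    have "(\<integral>\<^sup>+z. F (z, r) \<partial>lborel) = (\<integral>\<^sup>+z. ennreal (2 * r * exp (- r\<^sup>2)) * indicator {z::complex. t \<le> cmod z \<and> cmod z \<le> r} z \<partial>lborel)"
      by (intro nn_integral_cong) (auto simp: F_def split: split_indicator)
    also have "\<dots> = ennreal (2 * r * exp (- r\<^sup>2)) * emeasure lborel {z::complex. t \<le> cmod z \<and> cmod z \<le> r}"
      by (rule nn_integral_cmult_indicator) (simp add: pred_def)
    also have "\<dots> = ennreal (2 * r * exp (- r\<^sup>2) * (pi * (r\<^sup>2 - t\<^sup>2))) * indicator {t..} r"
      using t by (auto simp: ball_annulus ennreal_mult[symmetric] split: split_indicator)
    finally show "(\<integral>\<^sup>+z. F (z, r) \<partial>lborel) = \<dots>" .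
  qed
  also have "\<dots> = 0 - (- pi * (t\<^sup>2 - t\<^sup>2 + 1) * exp (- t\<^sup>2))"
  proof (rule nn_integral_FTC_atLeast[where F="\<lambda>r. - pi * (r\<^sup>2 - t\<^sup>2 + 1) * exp (- r\<^sup>2)" and T=0])
    show "((\<lambda>r::real. - pi * (r\<^sup>2 - t\<^sup>2 + 1) * exp (- r\<^sup>2)) \<longlongrightarrow> 0) at_top"
      using tendsto_mult[OF tendsto_const[of "- pi"] exp_tail_lim[of "1 - t\<^sup>2"]] by (simp add: algebra_simps)
    show "\<And>x. t \<le> x \<Longrightarrow> 0 \<le> 2 * x * exp (- x\<^sup>2) * (pi * (x\<^sup>2 - t\<^sup>2))"
      using t by (auto intro!: mult_nonneg_nonneg power_mono)
  qed (auto intro!: derivative_eq_intros simp: algebra_simps power2_eq_square)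
  finally show ?thesis by simp
qed

lemma radial:
  fixes w :: "real \<Rightarrow> real"
  assumes wm: "w \<in> borel_measurable borel"
  shows "(\<integral>\<^sup>+z. ennreal (exp (- (cmod z)\<^sup>2)) * (\<integral>\<^sup>+s. ennreal (w s) * indicator {0..cmod z} s \<partial>lborel) \<partial>(lborel::complex measure))
     = (\<integral>\<^sup>+s. ennreal (w s) * indicator {0..} s * ennreal (pi * exp (- s\<^sup>2)) \<partial>lborel)"
proof -
  have PS: "pair_sigma_finite (lborel :: complex measure) (lborel :: real measure)"
    by (intro pair_sigma_finite.intro) (simp_all add: sigma_finite_lborel)
  define H where "H = (\<lambda>p::complex \<times> real. ennreal (exp (- (cmod (fst p))\<^sup>2)) * ennreal (w (snd p)) *
      indicator {p. 0 \<le> snd p \<and> snd p \<le> cmod (fst p)} p)"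
  have Hm: "H \<in> borel_measurable (lborel \<Otimes>\<^sub>M lborel)"
    unfolding H_def using wm by measurable
  have "(\<integral>\<^sup>+z. ennreal (exp (- (cmod z)\<^sup>2)) * (\<integral>\<^sup>+s. ennreal (w s) * indicator {0..cmod z} s \<partial>lborel) \<partial>(lborel::complex measure))
      = (\<integral>\<^sup>+z. (\<integral>\<^sup>+s. H (z, s) \<partial>lborel) \<partial>lborel)"
  proof (intro nn_integral_cong)
    fix z :: complex
    have "(\<integral>\<^sup>+s. H (z, s) \<partial>lborel) = (\<integral>\<^sup>+s. ennreal (exp (- (cmod z)\<^sup>2)) * (ennreal (w s) * indicator {0..cmod z} s) \<partial>lborel)"
      by (intro nn_integral_cong) (auto simp: H_def split: split_indicator)
    also have "\<dots> = ennreal (exp (- (cmod z)\<^sup>2)) * (\<integral>\<^sup>+s. ennreal (w s) * indicator {0..cmod z} s \<partial>lborel)"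
      by (rule nn_integral_cmult) (use wm in measurable)
    finally show "ennreal (exp (- (cmod z)\<^sup>2)) * (\<integral>\<^sup>+s. ennreal (w s) * indicator {0..cmod z} s \<partial>lborel) = (\<integral>\<^sup>+s. H (z, s) \<partial>lborel)" ..
  qed
  also have "\<dots> = (\<integral>\<^sup>+s. (\<integral>\<^sup>+z. H (z, s) \<partial>lborel) \<partial>lborel)"
    by (rule pair_sigma_finite.Fubini[OF PS Hm, symmetric])
  also have "\<dots> = (\<integral>\<^sup>+s. ennreal (w s) * indicator {0..} s * ennreal (pi * exp (- s\<^sup>2)) \<partial>lborel)"
  proof (intro nn_integral_cong)
    fix s :: real
    have "(\<integral>\<^sup>+z. H (z, s) \<partial>lborel) = (\<integral>\<^sup>+z. (ennreal (w s) * indicator {0..} s) * (ennreal (exp (- (cmod z)\<^sup>2)) * indicator {z::complex. s \<le> cmod z} z) \<partial>lborel)"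
      by (intro nn_integral_cong) (auto simp: H_def mult_ac split: split_indicator)
    also have "\<dots> = (ennreal (w s) * indicator {0..} s) * (\<integral>\<^sup>+z. ennreal (exp (- (cmod z)\<^sup>2)) * indicator {z::complex. s \<le> cmod z} z \<partial>lborel)"
      by (rule nn_integral_cmult) measurable
    also have "\<dots> = ennreal (w s) * indicator {0..} s * ennreal (pi * exp (- s\<^sup>2))"
      by (cases "0 \<le> s") (auto simp: tail)
    finally show "(\<integral>\<^sup>+z. H (z, s) \<partial>lborel) = \<dots>" .
  qed
  finally show ?thesis .
qed

lemma pred_Icc_cmod[measurable]:
  "Measurable.pred (borel \<Otimes>\<^sub>M borel) (\<lambda>x::complex \<times> real. snd x \<in> {0..cmod (fst x)})"
  unfolding atLeastAtMost_iff by measurable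

lemma gd_abs_nn: "(\<integral>\<^sup>+z. ennreal (std_cgauss_density z * cmod z) \<partial>lborel) = ennreal (sqrt pi / 2)"
proof -
  have "(\<integral>\<^sup>+z. ennreal (std_cgauss_density z * cmod z) \<partial>lborel)
     = (\<integral>\<^sup>+z. ennreal (1 / pi) * (ennreal (exp (- (cmod z)\<^sup>2)) * (\<integral>\<^sup>+s. ennreal 1 * indicator {0..cmod z} s \<partial>lborel)) \<partial>(lborel::complex measure))"
    by (intro nn_integral_cong) (simp add: std_cgauss_density_def ennreal_mult[symmetric])
  also have "\<dots> = ennreal (1 / pi) * (\<integral>\<^sup>+z. ennreal (exp (- (cmod z)\<^sup>2)) * (\<integral>\<^sup>+s. ennreal 1 * indicator {0..cmod z} s \<partial>lborel) \<partial>(lborel::complex measure))"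
    by (rule nn_integral_cmult) measurable
  also have "\<dots> = ennreal (1 / pi) * (\<integral>\<^sup>+s. ennreal 1 * indicator {0..} s * ennreal (pi * exp (- s\<^sup>2)) \<partial>lborel)"
    by (subst radial) auto
  also have "\<dots> = (\<integral>\<^sup>+s. ennreal (indicator {0..} s *\<^sub>R exp (- s\<^sup>2)) \<partial>lborel)"
    by (subst nn_integral_cmult[symmetric]) (auto intro!: nn_integral_cong simp: ennreal_mult[symmetric] split: split_indicator)
  also have "\<dots> = ennreal (sqrt pi / 2)"
    using gaussian_moment_0 by (subst nn_integral_eq_integrable) (auto simp: has_bochner_integral_iff)
  finally show ?thesis .
qed

lemma gd_sq_nn: "(\<integral>\<^sup>+z. ennreal (std_cgauss_density z * (cmod z)\<^sup>2) \<partial>lborel) = 1"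
proof -
  have sq: "(\<integral>\<^sup>+s. ennreal (2 * s) * indicator {0..x} s \<partial>lborel) = ennreal (x\<^sup>2)" if "0 \<le> x" for x :: real
    using that by (subst nn_integral_FTC_Icc[where F="\<lambda>s. s\<^sup>2"]) (auto intro!: derivative_eq_intros)
  have "(\<integral>\<^sup>+z. ennreal (std_cgauss_density z * (cmod z)\<^sup>2) \<partial>lborel)
     = (\<integral>\<^sup>+z. ennreal (1 / pi) * (ennreal (exp (- (cmod z)\<^sup>2)) * (\<integral>\<^sup>+s. ennreal (2 * s) * indicator {0..cmod z} s \<partial>lborel)) \<partial>(lborel::complex measure))"
    by (intro nn_integral_cong) (simp add: sq std_cgauss_density_def ennreal_mult[symmetric])
  also have "\<dots> = ennreal (1 / pi) * (\<integral>\<^sup>+z. ennreal (exp (- (cmod z)\<^sup>2)) * (\<integral>\<^sup>+s. ennreal (2 * s) * indicator {0..cmod z} s \<partial>lborel) \<partial>(lborel::complex measure))"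
    by (rule nn_integral_cmult) measurable
  also have "\<dots> = ennreal (1 / pi) * (\<integral>\<^sup>+s. ennreal (2 * s) * indicator {0..} s * ennreal (pi * exp (- s\<^sup>2)) \<partial>lborel)"
    by (subst radial) auto
  also have "\<dots> = (\<integral>\<^sup>+s. ennreal (2 * s * exp (- s\<^sup>2)) * indicator {0..} s \<partial>lborel)"
    by (subst nn_integral_cmult[symmetric]) (auto intro!: nn_integral_cong simp: ennreal_mult[symmetric] split: split_indicator)
  also have "\<dots> = 1"
    by (subst exp_integral_atLeast) auto
  finally show ?thesis .
qed

lemma gd_nonneg[simp]: "0 \<le> std_cgauss_density z"
  by (simp add: std_cgauss_density_def)

lemma gd_meas[measurable]: "std_cgauss_density \<in> borel_measurable borel"
  unfolding std_cgauss_density_def[abs_def] by measurable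

lemma gd_abs_int: "has_bochner_integral lborel (\<lambda>z. std_cgauss_density z * cmod z) (sqrt pi / 2)"
  by (rule has_bochner_integral_nn_integral) (auto simp: gd_abs_nn)

lemma gd_sq_int: "has_bochner_integral lborel (\<lambda>z. std_cgauss_density z * (cmod z)\<^sup>2) 1"
  by (rule has_bochner_integral_nn_integral) (auto simp: gd_sq_nn)

lemma gd_id_integrable: "integrable lborel (\<lambda>z. std_cgauss_density z *\<^sub>R z)"
proof (rule integrableI_bounded)
  show "(\<lambda>z. std_cgauss_density z *\<^sub>R z) \<in> borel_measurable lborel" by measurable
  have "(\<integral>\<^sup>+z. ennreal (norm (std_cgauss_density z *\<^sub>R z)) \<partial>lborel) = ennreal (sqrt pi / 2)"
    by (simp add: gd_abs_nn)
  then show "(\<integral>\<^sup>+z. ennreal (norm (std_cgauss_density z *\<^sub>R z)) \<partial>lborel) < \<infinity>" by simp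
qed

lemma gd_id_zero: "(\<integral>z. std_cgauss_density z *\<^sub>R z \<partial>lborel) = 0"
proof -
  let ?F = "\<lambda>z::complex. std_cgauss_density z *\<^sub>R z"
  have L: "(lborel :: complex measure) = distr lborel borel (\<lambda>x. - x)"
    using lborel_affine[of "-1" "0::complex"] by (simp add: density_1)
  have "integral\<^sup>L lborel ?F = integral\<^sup>L (distr lborel borel (\<lambda>x. - x)) ?F"
    by (subst L[symmetric]) simp
  also have "\<dots> = (\<integral>x. ?F (- x) \<partial>lborel)"
    by (rule integral_distr) auto
  also have "\<dots> = - integral\<^sup>L lborel ?F"
    by (simp add: std_cgauss_density_def)
  finally show ?thesis by simp
qed

lemma gd_transfer:
  fixes h :: "complex \<Rightarrow> 'b::{banach, second_countable_topology}"
  assumes D: "distributed M lborel X (\<lambda>z. ennreal (std_cgauss_density z))"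
    and h: "h \<in> borel_measurable borel"
  shows "integrable M (\<lambda>\<omega>. h (X \<omega>)) \<longleftrightarrow> integrable lborel (\<lambda>z. std_cgauss_density z *\<^sub>R h z)"
    and "integral\<^sup>L M (\<lambda>\<omega>. h (X \<omega>)) = (\<integral>z. std_cgauss_density z *\<^sub>R h z \<partial>lborel)"
proof -
  have Xm: "X \<in> measurable M lborel" using D by (rule distributed_measurable)
  have eq: "distr M lborel X = density lborel (\<lambda>z. ennreal (std_cgauss_density z))"
    using D by (simp add: distributed_def)
  have hm: "h \<in> borel_measurable lborel" using h by simp
  show "integrable M (\<lambda>\<omega>. h (X \<omega>)) \<longleftrightarrow> integrable lborel (\<lambda>z. std_cgauss_density z *\<^sub>R h z)"
    using integrable_distr_eq[OF Xm hm] eq integrable_density[OF hm, of std_cgauss_density] by simp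
  show "integral\<^sup>L M (\<lambda>\<omega>. h (X \<omega>)) = (\<integral>z. std_cgauss_density z *\<^sub>R h z \<partial>lborel)"
    using integral_distr[OF Xm hm] eq integral_density[OF hm, of std_cgauss_density] by simp
qed



lemma cmod_steering[simp]: "cmod (steering dhat lam N \<theta> n) = 1"
  by (simp add: steering_def)

lemma bg_nonneg: "0 \<le> beam_gain G dhat lam N Mt \<theta> \<phi>"
  unfolding beam_gain_def by (intro sum_nonneg) auto

lemma bg_bound_k:
  "(cmod (\<Sum>n=1..N. G n k * cis (\<phi> n) * steering dhat lam N \<theta> n))\<^sup>2 \<le> real N * (\<Sum>n=1..N. (cmod (G n k))\<^sup>2)"
proof -
  have "cmod (\<Sum>n=1..N. G n k * cis (\<phi> n) * steering dhat lam N \<theta> n) \<le> (\<Sum>n=1..N. cmod (G n k * cis (\<phi> n) * steering dhat lam N \<theta> n))"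
    by (rule norm_sum)
  also have "\<dots> = (\<Sum>n=1..N. cmod (G n k))"
    by (simp add: norm_mult)
  finally have "(cmod (\<Sum>n=1..N. G n k * cis (\<phi> n) * steering dhat lam N \<theta> n))\<^sup>2 \<le> (\<Sum>n=1..N. cmod (G n k))\<^sup>2"
    by (intro power_mono) auto
  also have "\<dots> \<le> (\<Sum>n=1..N. (cmod (G n k))\<^sup>2) * card {1..N}"
    by (rule sum_squared_le_sum_of_squares)
  finally show ?thesis
    by (simp add: mult_ac)
qed

lemma bg_bound:
  "beam_gain G dhat lam N Mt \<theta> \<phi> \<le> real N * (\<Sum>k=1..Mt. \<Sum>n=1..N. (cmod (G n k))\<^sup>2)"
proof -
  have "beam_gain G dhat lam N Mt \<theta> \<phi> \<le> (\<Sum>k=1..Mt. real N * (\<Sum>n=1..N. (cmod (G n k))\<^sup>2))"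
    unfolding beam_gain_def by (rule sum_mono) (rule bg_bound_k)
  also have "\<dots> = real N * (\<Sum>k=1..Mt. \<Sum>n=1..N. (cmod (G n k))\<^sup>2)"
    by (rule sum_distrib_left[symmetric])
  finally show ?thesis .
qed

lemma bg_bdd: "bdd_above (range (beam_gain G dhat lam N Mt \<theta>))"
  using bg_bound by (intro bdd_aboveI) blast

lemma bg_le_gamma: "beam_gain G dhat lam N Mt \<theta> \<phi> \<le> gamma2_star G dhat lam N Mt \<theta>"
  unfolding gamma2_star_def by (rule cSUP_upper[OF _ bg_bdd]) simp

lemma gamma_le: "gamma2_star G dhat lam N Mt \<theta> \<le> real N * (\<Sum>k=1..Mt. \<Sum>n=1..N. (cmod (G n k))\<^sup>2)"
  unfolding gamma2_star_def
proof (rule cSUP_least)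
  fix x show "beam_gain G dhat lam N Mt \<theta> x \<le> real N * (\<Sum>k=1..Mt. \<Sum>n=1..N. (cmod (G n k))\<^sup>2)"
    by (rule bg_bound)
qed simp

lemma gamma_nonneg: "0 \<le> gamma2_star G dhat lam N Mt \<theta>"
  using bg_nonneg bg_le_gamma order_trans by blast

lemma bg_cong: "(\<And>n. n \<in> {1..N} \<Longrightarrow> \<phi> n = \<psi> n) \<Longrightarrow> beam_gain G dhat lam N Mt \<theta> \<phi> = beam_gain G dhat lam N Mt \<theta> \<psi>"
  unfolding beam_gain_def by (intro sum.cong refl arg_cong[where f="\<lambda>x. (cmod x)\<^sup>2"]) auto

lemma bg_tendsto:
  assumes "\<And>n. ((\<lambda>m. F m n) \<longlongrightarrow> \<phi> n) sequentially"
  shows "((\<lambda>m. beam_gain G dhat lam N Mt \<theta> (F m)) \<longlongrightarrow> beam_gain G dhat lam N Mt \<theta> \<phi>) sequentially"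
  unfolding beam_gain_def by (intro tendsto_intros assms)

definition qf :: "nat \<times> int list \<Rightarrow> nat \<Rightarrow> real" where
  "qf p = (\<lambda>n. real_of_int (snd p ! n) / real (Suc (fst p)))"

lemma floor_approx: "((\<lambda>m. real_of_int \<lfloor>x * real (Suc m)\<rfloor> / real (Suc m)) \<longlongrightarrow> x) sequentially"
proof (rule tendsto_sandwich[where f="\<lambda>m. x - 1 / real (Suc m)" and h="\<lambda>m. x"])
  show "\<forall>\<^sub>F m in sequentially. x - 1 / real (Suc m) \<le> real_of_int \<lfloor>x * real (Suc m)\<rfloor> / real (Suc m)"
  proof (intro always_eventually allI)
    fix m
    have "x * real (Suc m) - 1 \<le> real_of_int \<lfloor>x * real (Suc m)\<rfloor>" by linarith
    then have "(x * real (Suc m) - 1) / real (Suc m) \<le> real_of_int \<lfloor>x * real (Suc m)\<rfloor> / real (Suc m)"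
      by (rule divide_right_mono) simp
    moreover have "(x * real (Suc m) - 1) / real (Suc m) = x - 1 / real (Suc m)"
      by (simp add: diff_divide_distrib)
    ultimately show "x - 1 / real (Suc m) \<le> real_of_int \<lfloor>x * real (Suc m)\<rfloor> / real (Suc m)"
      by simp
  qed
  show "\<forall>\<^sub>F m in sequentially. real_of_int \<lfloor>x * real (Suc m)\<rfloor> / real (Suc m) \<le> x"
  proof (intro always_eventually allI)
    fix m
    have "real_of_int \<lfloor>x * real (Suc m)\<rfloor> \<le> x * real (Suc m)" by linarith
    then have "real_of_int \<lfloor>x * real (Suc m)\<rfloor> / real (Suc m) \<le> x * real (Suc m) / real (Suc m)"
      by (rule divide_right_mono) simp
    then show "real_of_int \<lfloor>x * real (Suc m)\<rfloor> / real (Suc m) \<le> x"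
      by simp
  qed
  have "((\<lambda>m. x - 1 / real (Suc m)) \<longlongrightarrow> x - 0) sequentially"
    using tendsto_diff[OF tendsto_const LIMSEQ_Suc[OF lim_1_over_n]] by simp
  then show "((\<lambda>m. x - 1 / real (Suc m)) \<longlongrightarrow> x) sequentially" by simp
qed simp

lemma gamma_countable:
  "gamma2_star G dhat lam N Mt \<theta> = (SUP p. beam_gain G dhat lam N Mt \<theta> (qf p))"
proof (rule antisym)
  have bdd: "bdd_above (range (\<lambda>p. beam_gain G dhat lam N Mt \<theta> (qf p)))"
    using bg_bound by (intro bdd_aboveI) blast
  show "gamma2_star G dhat lam N Mt \<theta> \<le> (SUP p. beam_gain G dhat lam N Mt \<theta> (qf p))"
    unfolding gamma2_star_def
  proof (rule cSUP_least)
    fix \<phi>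
    define ks where "ks m = map (\<lambda>n. \<lfloor>\<phi> n * real (Suc m)\<rfloor>) [0..<Suc N]" for m
    have eq: "beam_gain G dhat lam N Mt \<theta> (qf (m, ks m)) =
        beam_gain G dhat lam N Mt \<theta> (\<lambda>n. real_of_int \<lfloor>\<phi> n * real (Suc m)\<rfloor> / real (Suc m))" for m
      by (rule bg_cong) (auto simp: qf_def ks_def nth_map simp del: upt_Suc)
    have "((\<lambda>m. beam_gain G dhat lam N Mt \<theta> (\<lambda>n. real_of_int \<lfloor>\<phi> n * real (Suc m)\<rfloor> / real (Suc m)))
        \<longlongrightarrow> beam_gain G dhat lam N Mt \<theta> \<phi>) sequentially"
      by (rule bg_tendsto) (rule floor_approx)
    moreover have "\<exists>N0. \<forall>m\<ge>N0. beam_gain G dhat lam N Mt \<theta> (\<lambda>n. real_of_int \<lfloor>\<phi> n * real (Suc m)\<rfloor> / real (Suc m))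
        \<le> (SUP p. beam_gain G dhat lam N Mt \<theta> (qf p))"
      using eq by (auto intro!: cSUP_upper2[OF bdd, of "(m, ks m)" for m] simp del: eq)
    ultimately show "beam_gain G dhat lam N Mt \<theta> \<phi> \<le> (SUP p. beam_gain G dhat lam N Mt \<theta> (qf p))"
      by (rule LIMSEQ_le_const2)
  qed simp
  show "(SUP p. beam_gain G dhat lam N Mt \<theta> (qf p)) \<le> gamma2_star G dhat lam N Mt \<theta>"
    by (rule cSUP_least) (auto intro: bg_le_gamma)
qed



definition ycomp :: "complex \<Rightarrow> complex" where
  "ycomp z = (if z = 0 then 1 else cnj z / complex_of_real (cmod z))"

lemma ycomp_norm[simp]: "cmod (ycomp z) = 1"
  by (simp add: ycomp_def norm_divide)

lemma ycomp_nz[simp]: "ycomp z \<noteq> 0"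
  using ycomp_norm[of z] by (metis norm_zero zero_neq_one)

lemma mult_ycomp: "z * ycomp z = complex_of_real (cmod z)"
proof (cases "z = 0")
  case False
  have "z * cnj z = complex_of_real ((cmod z)\<^sup>2)" by (rule complex_norm_square[symmetric])
  then have "z * ycomp z = complex_of_real ((cmod z)\<^sup>2) / complex_of_real (cmod z)"
    using False by (simp add: ycomp_def)
  also have "\<dots> = complex_of_real (cmod z)"
    using False by (simp add: power2_eq_square)
  finally show ?thesis .
qed (simp add: ycomp_def)

lemma ycomp_meas[measurable]: "ycomp \<in> borel_measurable borel"
proof -
  have [measurable]: "cnj \<in> borel_measurable borel"
    by (intro borel_measurable_continuous_onI continuous_intros)
  have [measurable]: "(\<lambda>x. complex_of_real (cmod x)) \<in> borel_measurable borel"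
    by (intro borel_measurable_continuous_onI continuous_intros)
  have [measurable]: "{z::complex \<in> space borel. z = 0} \<in> sets borel"
    by simp
  show ?thesis unfolding ycomp_def[abs_def] by measurable
qed

lemma indep_prod:
  fixes X :: "'i \<Rightarrow> 'a \<Rightarrow> 'b::topological_space" and h :: "'i \<Rightarrow> 'b \<Rightarrow> complex"
  assumes P: "prob_space M" and ind: "prob_space.indep_vars M (\<lambda>_. borel) X I"
    and J: "J \<subseteq> I" "finite J"
    and hm: "\<And>i. i \<in> J \<Longrightarrow> h i \<in> borel_measurable borel"
    and hi: "\<And>i. i \<in> J \<Longrightarrow> integrable M (\<lambda>\<omega>. h i (X i \<omega>))"
  shows "integral\<^sup>L M (\<lambda>\<omega>. \<Prod>i\<in>J. h i (X i \<omega>)) = (\<Prod>i\<in>J. integral\<^sup>L M (\<lambda>\<omega>. h i (X i \<omega>)))"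
    and "integrable M (\<lambda>\<omega>. \<Prod>i\<in>J. h i (X i \<omega>))"
proof -
  interpret prob_space M by (rule P)
  have "indep_vars (\<lambda>_. borel) X J" using indep_vars_subset[OF ind J(1)] .
  then have I2: "indep_vars (\<lambda>_. borel) (\<lambda>i \<omega>. h i (X i \<omega>)) J"
    by (rule indep_vars_compose2) (use hm in auto)
  show "integral\<^sup>L M (\<lambda>\<omega>. \<Prod>i\<in>J. h i (X i \<omega>)) = (\<Prod>i\<in>J. integral\<^sup>L M (\<lambda>\<omega>. h i (X i \<omega>)))"
    by (rule indep_vars_lebesgue_integral[OF J(2) I2 hi])
  show "integrable M (\<lambda>\<omega>. \<Prod>i\<in>J. h i (X i \<omega>))"
    by (rule indep_vars_integrable[OF J(2) I2 hi])
qed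

lemma bg_meas:
  assumes Gm: "\<And>n k. n \<in> {1..N} \<Longrightarrow> k \<in> {1..Mt} \<Longrightarrow> (\<lambda>\<omega>. G \<omega> n k) \<in> borel_measurable M"
  shows "(\<lambda>\<omega>. beam_gain (G \<omega>) dhat lam N Mt \<theta> \<phi>) \<in> borel_measurable M"
  unfolding beam_gain_def
proof (intro borel_measurable_sum)
  fix k assume k: "k \<in> {1..Mt}"
  have "(\<lambda>\<omega>. \<Sum>n=1..N. G \<omega> n k * cis (\<phi> n) * steering dhat lam N \<theta> n) \<in> borel_measurable M"
  proof (intro borel_measurable_sum)
    fix n assume n: "n \<in> {1..N}"
    show "(\<lambda>\<omega>. G \<omega> n k * cis (\<phi> n) * steering dhat lam N \<theta> n) \<in> borel_measurable M"
      using Gm[OF n k] by measurable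
  qed
  then show "(\<lambda>\<omega>. (cmod (\<Sum>n=1..N. G \<omega> n k * cis (\<phi> n) * steering dhat lam N \<theta> n))\<^sup>2) \<in> borel_measurable M"
    by measurable
qed

lemma gamma_meas:
  assumes Gm: "\<And>n k. n \<in> {1..N} \<Longrightarrow> k \<in> {1..Mt} \<Longrightarrow> (\<lambda>\<omega>. G \<omega> n k) \<in> borel_measurable M"
  shows "(\<lambda>\<omega>. gamma2_star (G \<omega>) dhat lam N Mt \<theta>) \<in> borel_measurable M"
  unfolding gamma_countable
proof (rule borel_measurable_cSUP)
  show "countable (UNIV :: (nat \<times> int list) set)" by simp
  show "(\<lambda>\<omega>. beam_gain (G \<omega>) dhat lam N Mt \<theta> (qf i)) \<in> borel_measurable M" for i
    by (rule bg_meas[OF Gm])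
  show "bdd_above ((\<lambda>i. beam_gain (G x) dhat lam N Mt \<theta> (qf i)) ` UNIV)" for x
    using bg_bound by (intro bdd_aboveI) blast
qed



locale gs = prob_space M for M :: "'w measure" +
  fixes G :: "'w \<Rightarrow> nat \<Rightarrow> nat \<Rightarrow> complex" and N Mt :: nat
  assumes ind: "indep_vars (\<lambda>_. borel) (\<lambda>nk \<omega>. G \<omega> (fst nk) (snd nk)) ({1..N} \<times> {1..Mt})"
    and D: "\<And>n k. n \<in> {1..N} \<Longrightarrow> k \<in> {1..Mt} \<Longrightarrow>
           distributed M lborel (\<lambda>\<omega>. G \<omega> n k) (\<lambda>z. ennreal (std_cgauss_density z))"
begin

lemma Gm: "n \<in> {1..N} \<Longrightarrow> k \<in> {1..Mt} \<Longrightarrow> (\<lambda>\<omega>. G \<omega> n k) \<in> borel_measurable M"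
  using distributed_measurable[OF D] by simp

lemma E_sq:
  assumes "n \<in> {1..N}" "k \<in> {1..Mt}"
  shows "integrable M (\<lambda>\<omega>. (cmod (G \<omega> n k))\<^sup>2)" and "expectation (\<lambda>\<omega>. (cmod (G \<omega> n k))\<^sup>2) = 1"
  using gd_transfer[OF D[OF assms], of "\<lambda>z. (cmod z)\<^sup>2"] gd_sq_int by (auto simp: has_bochner_integral_iff)

lemma E_abs:
  assumes "n \<in> {1..N}" "k \<in> {1..Mt}"
  shows "integrable M (\<lambda>\<omega>. cmod (G \<omega> n k))" and "expectation (\<lambda>\<omega>. cmod (G \<omega> n k)) = sqrt pi / 2"
  using gd_transfer[OF D[OF assms], of "\<lambda>z. cmod z"] gd_abs_int by (auto simp: has_bochner_integral_iff)

lemma E_id: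
  assumes "n \<in> {1..N}" "k \<in> {1..Mt}"
  shows "integrable M (\<lambda>\<omega>. G \<omega> n k)" and "expectation (\<lambda>\<omega>. G \<omega> n k) = 0"
  using gd_transfer[OF D[OF assms], of "\<lambda>z. z"] gd_id_integrable gd_id_zero by auto

lemma E_y:
  assumes "n \<in> {1..N}" "k \<in> {1..Mt}"
  shows "integrable M (\<lambda>\<omega>. ycomp (G \<omega> n k))"
  by (rule integrable_const_bound[where B=1]) (use Gm[OF assms] in auto)

definition a :: "nat \<Rightarrow> nat \<Rightarrow> 'w \<Rightarrow> complex" where
  "a k n \<omega> = G \<omega> n k * ycomp (G \<omega> n 1)"

lemma cross:
  assumes n: "n \<in> {1..N}" and m: "m \<in> {1..N}" and k: "k \<in> {1..Mt}"
  shows "integrable M (\<lambda>\<omega>. a k n \<omega> * cnj (a k m \<omega>))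
     \<and> expectation (\<lambda>\<omega>. a k n \<omega> * cnj (a k m \<omega>)) = (if n = m then 1 else if k = 1 then of_real (pi / 4) else 0)"
proof -
  have one: "1 \<in> {1..Mt}" using k by auto
  show ?thesis
  proof (cases "n = m")
    case True
    have eq: "a k n \<omega> * cnj (a k m \<omega>) = complex_of_real ((cmod (G \<omega> n k))\<^sup>2)" for \<omega>
    proof -
      have "a k n \<omega> * cnj (a k m \<omega>) = complex_of_real ((cmod (a k n \<omega>))\<^sup>2)"
        using True by (simp only: complex_norm_square)
      also have "cmod (a k n \<omega>) = cmod (G \<omega> n k)" by (simp add: a_def norm_mult)
      finally show ?thesis .
    qed
    show ?thesis unfolding eq using E_sq[OF n k] True by (simp del: of_real_power)
  next
    case nm: False
    show ?thesis
    proof (cases "k = 1")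
      case True
      let ?h = "\<lambda>(i::nat \<times> nat) z. complex_of_real (cmod z)"
      have eq: "a k n \<omega> * cnj (a k m \<omega>) = (\<Prod>i\<in>{(n,1),(m,1)}. ?h i (G \<omega> (fst i) (snd i)))" for \<omega>
        using True nm by (simp add: a_def mult_ycomp)
      have hi: "integrable M (\<lambda>\<omega>. ?h i (G \<omega> (fst i) (snd i)))" if "i \<in> {(n,1),(m,1)}" for i
        using that E_abs(1)[OF n one] E_abs(1)[OF m one] by auto
      have hm: "?h i \<in> borel_measurable borel" for i
        by (intro borel_measurable_continuous_onI continuous_intros)
      have J: "{(n,1),(m,1)} \<subseteq> {1..N} \<times> {1..Mt}" using n m one by auto
      note R = indep_prod[OF prob_space_axioms ind J _ hm hi]
      have "expectation (\<lambda>\<omega>. a k n \<omega> * cnj (a k m \<omega>)) = (\<Prod>i\<in>{(n,1),(m,1)}. expectation (\<lambda>\<omega>. ?h i (G \<omega> (fst i) (snd i))))"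
        unfolding eq by (rule R(1)) simp
      also have "\<dots> = expectation (\<lambda>\<omega>. complex_of_real (cmod (G \<omega> n 1))) * expectation (\<lambda>\<omega>. complex_of_real (cmod (G \<omega> m 1)))"
        using nm by simp
      also have "\<dots> = complex_of_real (sqrt pi / 2) * complex_of_real (sqrt pi / 2)"
        by (simp only: integral_complex_of_real E_abs(2)[OF n one] E_abs(2)[OF m one])
      also have "\<dots> = complex_of_real (pi / 4)"
        by (simp flip: of_real_mult)
      finally show ?thesis using R(2) nm True unfolding eq by simp
    next
      case k1: False
      define h where "h = (\<lambda>(i::nat \<times> nat) (z::complex). if i = (n,k) then z else if i = (m,k) then cnj z
         else if i = (n,1) then ycomp z else cnj (ycomp z))"
      let ?J = "{(n,k),(m,k),(n,1),(m,1)}"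
      have eq: "a k n \<omega> * cnj (a k m \<omega>) = (\<Prod>i\<in>?J. h i (G \<omega> (fst i) (snd i)))" for \<omega>
        using k1 nm by (simp add: a_def h_def mult_ac)
      have hi: "integrable M (\<lambda>\<omega>. h i (G \<omega> (fst i) (snd i)))" if "i \<in> ?J" for i
        using that k1 nm E_id(1)[OF n k] E_id(1)[OF m k] E_y[OF n one] E_y[OF m one] by (auto simp: h_def)
      have hm: "h i \<in> borel_measurable borel" for i
      proof -
        have [measurable]: "cnj \<in> borel_measurable borel"
          by (intro borel_measurable_continuous_onI continuous_intros)
        show ?thesis unfolding h_def by simp measurable
      qed
      have J: "?J \<subseteq> {1..N} \<times> {1..Mt}" using n m one k by auto
      note R = indep_prod[OF prob_space_axioms ind J _ hm hi]
      have "expectation (\<lambda>\<omega>. a k n \<omega> * cnj (a k m \<omega>)) = (\<Prod>i\<in>?J. expectation (\<lambda>\<omega>. h i (G \<omega> (fst i) (snd i))))"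
        unfolding eq by (rule R(1)) simp
      also have "\<dots> = 0"
        using k1 nm E_id(2)[OF n k] by (simp add: h_def)
      finally show ?thesis using R(2) nm k1 unfolding eq by simp
    qed
  qed
qed


lemma sum_ifeq:
  fixes c :: "'b::field"
  assumes "finite A"
  shows "(\<Sum>n\<in>A. \<Sum>m\<in>A. (if n = m then 1 else c)) = of_nat (card A) * (of_nat (card A) * c + 1 - c)"
proof -
  have "(\<Sum>m\<in>A. (if n = m then 1 else c)) = of_nat (card A) * c + (1 - c)" if "n \<in> A" for n
  proof -
    have "(\<Sum>m\<in>A. (if n = m then 1 else c)) = (\<Sum>m\<in>A. c + (if n = m then 1 - c else 0))"
      by (intro sum.cong) auto
    also have "\<dots> = of_nat (card A) * c + (1 - c)"
      using assms that by (simp add: sum.distrib)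
    finally show ?thesis .
  qed
  then have "(\<Sum>n\<in>A. \<Sum>m\<in>A. (if n = m then 1 else c)) = (\<Sum>n\<in>A. of_nat (card A) * c + (1 - c))"
    by (intro sum.cong) auto
  also have "\<dots> = of_nat (card A) * (of_nat (card A) * c + 1 - c)"
    by (simp add: algebra_simps)
  finally show ?thesis .
qed

lemma E_col:
  assumes k: "k \<in> {1..Mt}"
  shows "integrable M (\<lambda>\<omega>. (cmod (\<Sum>n=1..N. a k n \<omega>))\<^sup>2)
    \<and> expectation (\<lambda>\<omega>. (cmod (\<Sum>n=1..N. a k n \<omega>))\<^sup>2)
        = real N * (real N * (if k = 1 then pi / 4 else 0) + 1 - (if k = 1 then pi / 4 else 0))"
proof -
  define c :: complex where "c = (if k = 1 then of_real (pi / 4) else 0)"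
  define F where "F \<omega> = (\<Sum>n\<in>{1..N}. \<Sum>m\<in>{1..N}. a k n \<omega> * cnj (a k m \<omega>))" for \<omega>
  have pw: "(cmod (\<Sum>n=1..N. a k n \<omega>))\<^sup>2 = Re (F \<omega>)" for \<omega>
  proof -
    have "complex_of_real ((cmod (\<Sum>n=1..N. a k n \<omega>))\<^sup>2) = (\<Sum>n=1..N. a k n \<omega>) * cnj (\<Sum>n=1..N. a k n \<omega>)"
      by (rule complex_norm_square)
    also have "\<dots> = F \<omega>"
      by (simp add: F_def cnj_sum sum_product)
    finally show ?thesis by (metis Re_complex_of_real)
  qed
  have Fint: "integrable M F"
    unfolding F_def using cross k by (intro Bochner_Integration.integrable_sum) auto
  have "expectation F = (\<Sum>n\<in>{1..N}. \<Sum>m\<in>{1..N}. expectation (\<lambda>\<omega>. a k n \<omega> * cnj (a k m \<omega>)))"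
    unfolding F_def using cross k by (subst Bochner_Integration.integral_sum) (auto intro!: Bochner_Integration.integral_sum sum.cong)
  also have "\<dots> = (\<Sum>n\<in>{1..N}. \<Sum>m\<in>{1..N}. (if n = m then 1 else c))"
    using cross k by (intro sum.cong refl) (auto simp: c_def)
  also have "\<dots> = of_nat N * (of_nat N * c + 1 - c)"
    by (subst sum_ifeq) auto
  finally have EF: "expectation F = of_nat N * (of_nat N * c + 1 - c)" .
  show ?thesis
    unfolding pw using Fint EF by (auto simp: c_def)
qed

definition L :: "'w \<Rightarrow> real" where
  "L \<omega> = (\<Sum>k=1..Mt. (cmod (\<Sum>n=1..N. a k n \<omega>))\<^sup>2)"

lemma E_L:
  assumes "Mt > 0"
  shows "integrable M L \<and> expectation L = pi * real N * (real N - 1) / 4 + real Mt * real N"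
proof -
  have "integrable M L" unfolding L_def using E_col by (intro Bochner_Integration.integrable_sum) auto
  moreover have "expectation L = (\<Sum>k\<in>{1..Mt}. real N * (real N * (if k = 1 then pi / 4 else 0) + 1 - (if k = 1 then pi / 4 else 0)))"
    unfolding L_def using E_col by (subst Bochner_Integration.integral_sum) (auto intro!: sum.cong)
  moreover have "\<dots> = (\<Sum>k\<in>{1..Mt}. real N + (if k = 1 then pi * real N * (real N - 1) / 4 else 0))"
    by (intro sum.cong) (auto simp: field_simps)
  moreover have "\<dots> = pi * real N * (real N - 1) / 4 + real Mt * real N"
    using assms by (simp add: sum.distrib)
  ultimately show ?thesis by simp
qed

end



context gs
begin

lemma L_le_gamma: "L \<omega> \<le> gamma2_star (G \<omega>) dhat lam N Mt \<theta>"
proof -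
  define \<phi> where "\<phi> n = Arg (ycomp (G \<omega> n 1)) - pi * (2 * real n - real N - 1) * dhat * sin \<theta> / lam" for n
  have t: "G \<omega> n k * cis (\<phi> n) * steering dhat lam N \<theta> n = a k n \<omega>" for n k
  proof -
    have "cis (\<phi> n) * steering dhat lam N \<theta> n = cis (Arg (ycomp (G \<omega> n 1)))"
      by (simp add: steering_def \<phi>_def cis_mult)
    also have "\<dots> = ycomp (G \<omega> n 1)"
      by (simp add: cis_Arg sgn_eq)
    finally show ?thesis by (simp add: a_def mult.assoc)
  qed
  have "L \<omega> = beam_gain (G \<omega>) dhat lam N Mt \<theta> \<phi>"
    unfolding L_def beam_gain_def t ..
  also have "\<dots> \<le> gamma2_star (G \<omega>) dhat lam N Mt \<theta>"
    by (rule bg_le_gamma)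
  finally show ?thesis .
qed

lemma result:
  assumes "Mt > 0"
  shows "integrable M (\<lambda>\<omega>. gamma2_star (G \<omega>) dhat lam N Mt \<theta>)
    \<and> pi * real N * (real N - 1) / 4 + real Mt * real N
        \<le> expectation (\<lambda>\<omega>. gamma2_star (G \<omega>) dhat lam N Mt \<theta>)
    \<and> expectation (\<lambda>\<omega>. gamma2_star (G \<omega>) dhat lam N Mt \<theta>)
        \<le> real Mt * (real N)\<^sup>2"
proof -
  define U where "U \<omega> = real N * (\<Sum>k=1..Mt. \<Sum>n=1..N. (cmod (G \<omega> n k))\<^sup>2)" for \<omega>
  have Uint: "integrable M U"
    unfolding U_def using E_sq(1)
    by (intro integrable_mult_right Bochner_Integration.integrable_sum) auto
  have EU: "expectation U = real Mt * (real N)\<^sup>2"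
  proof -
    have "expectation U = real N * (\<Sum>k=1..Mt. \<Sum>n=1..N. expectation (\<lambda>\<omega>. (cmod (G \<omega> n k))\<^sup>2))"
    proof -
      have "expectation (\<lambda>\<omega>. \<Sum>k=1..Mt. \<Sum>n=1..N. (cmod (G \<omega> n k))\<^sup>2)
          = (\<Sum>k=1..Mt. expectation (\<lambda>\<omega>. \<Sum>n=1..N. (cmod (G \<omega> n k))\<^sup>2))"
        using E_sq(1) by (intro Bochner_Integration.integral_sum Bochner_Integration.integrable_sum) auto
      also have "\<dots> = (\<Sum>k=1..Mt. \<Sum>n=1..N. expectation (\<lambda>\<omega>. (cmod (G \<omega> n k))\<^sup>2))"
        using E_sq(1) by (intro sum.cong refl Bochner_Integration.integral_sum) auto
      finally show ?thesis unfolding U_def by simp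
    qed
    also have "\<dots> = real N * (\<Sum>k=1..Mt. \<Sum>n=1..N. 1)"
      using E_sq(2) by (intro arg_cong[where f="\<lambda>x. real N * x"] sum.cong refl) auto
    finally show ?thesis by (simp add: power2_eq_square)
  qed
  have gm: "(\<lambda>\<omega>. gamma2_star (G \<omega>) dhat lam N Mt \<theta>) \<in> borel_measurable M"
    by (rule gamma_meas) (rule Gm)
  have gle: "gamma2_star (G \<omega>) dhat lam N Mt \<theta> \<le> U \<omega>" for \<omega>
    unfolding U_def by (rule gamma_le)
  have gint: "integrable M (\<lambda>\<omega>. gamma2_star (G \<omega>) dhat lam N Mt \<theta>)"
  proof (rule Bochner_Integration.integrable_bound[OF Uint gm])
    show "AE x in M. norm (gamma2_star (G x) dhat lam N Mt \<theta>) \<le> norm (U x)"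
      using gamma_nonneg gle by (auto intro!: AE_I2 order_trans[OF _ abs_ge_self])
  qed
  have up: "expectation (\<lambda>\<omega>. gamma2_star (G \<omega>) dhat lam N Mt \<theta>) \<le> real Mt * (real N)\<^sup>2"
    using integral_mono[OF gint Uint gle] EU by simp
  have lo: "pi * real N * (real N - 1) / 4 + real Mt * real N \<le> expectation (\<lambda>\<omega>. gamma2_star (G \<omega>) dhat lam N Mt \<theta>)"
    using integral_mono[OF conjunct1[OF E_L[OF assms]] gint L_le_gamma] conjunct2[OF E_L[OF assms]] by simp
  show ?thesis using gint up lo by simp
qed

end

theorem proposition4:
  fixes M :: "'w measure" and G :: "'w \<Rightarrow> nat \<Rightarrow> nat \<Rightarrow> complex"
    and N Mt :: nat and dhat lam \<theta> :: real
  assumes "prob_space M"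
    and "dhat > 0" and "lam > 0"
    and "N > 0" and "even N" and "Mt > 0"
    and "prob_space.indep_vars M (\<lambda>_. borel) (\<lambda>nk \<omega>. G \<omega> (fst nk) (snd nk))
           ({1..N} \<times> {1..Mt})"
    and "\<And>n k. n \<in> {1..N} \<Longrightarrow> k \<in> {1..Mt} \<Longrightarrow>
           distributed M lborel (\<lambda>\<omega>. G \<omega> n k) (\<lambda>z. ennreal (std_cgauss_density z))"
  shows "integrable M (\<lambda>\<omega>. gamma2_star (G \<omega>) dhat lam N Mt \<theta>)
    \<and> pi * real N * (real N - 1) / 4 + real Mt * real N
        \<le> prob_space.expectation M (\<lambda>\<omega>. gamma2_star (G \<omega>) dhat lam N Mt \<theta>)
    \<and> prob_space.expectation M (\<lambda>\<omega>. gamma2_star (G \<omega>) dhat lam N Mt \<theta>)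
        \<le> real Mt * (real N)\<^sup>2"
proof -
  interpret gs M G N Mt
    using assms(1,7,8) by (simp add: gs_def gs_axioms_def)
  show ?thesis by (rule result[OF assms(6)])
qed


end
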